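(* Let $\vec f$ be a smooth closed plane curve parametrized by arc length with rotation number $n\ge1$. Then \[ I_0=\frac{16\pi^4}{L^3}\sum_{k\in\mathbb Z}k^3(k-n)|\hat f(k)|^2=\frac{16\pi^4}{L^3}\sum_{k\in\mathbb Z}k^2(k-n)^2|\hat f(k)|^2 . \] In particular $I_0\ge 0$, with equality if and only if the image of $\vec f$ is an $n$-fold circle.
   Context: A closed plane curve is a smooth map $\vec f:\mathbb{R}/L\mathbb{Z}\to\mathbb{R}^2$ parametrized by arc length $s$, where $L>0$ is its length. $\vec\tau=\partial_s\vec f$, $\vec\nu$ is $\vec\tau$ rotated counterclockwise by $\pi/2$, $\kappa=\partial_s^2\vec f\cdot\vec\nu$, and the rotation number is $n=\frac{1}{2\pi}\int_0^L\kappa\,ds$. Let $\tilde\kappa=\kappa-\frac1L\int_0^L\kappa\,ds$ and $I_0=L\int_0^L\tilde\kappa^2\,ds$. Identifying $\mathbb{R}^2$ with $\mathbb{C}$, $f=f_1+if_2$, and $\hat f(k)=L^{-1/2}\int_0^L f(s)e^{-2\pi i k s/L}\,ds$. An $n$-fold circle is the image of a map of the form $s\mapsto c+re^{2\pi i n (s+\sigma)/L}$ with $c\in\mathbb C$, $r>0$, $\sigma\in\mathbb R$. *)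

theory Defs
  imports "HOL-Analysis.Analysis"
begin

text \<open>Plane curves are maps real \<Rightarrow> complex (identifying R^2 with C).\<close>

definition vderiv :: "(real \<Rightarrow> complex) \<Rightarrow> real \<Rightarrow> complex" where
  "vderiv g = (\<lambda>t. vector_derivative g (at t))"

definition smooth_curve :: "(real \<Rightarrow> complex) \<Rightarrow> bool" where
  "smooth_curve f \<longleftrightarrow> (\<forall>k x. (vderiv ^^ k) f differentiable (at x))"

definition closed_arclength_curve :: "(real \<Rightarrow> complex) \<Rightarrow> real \<Rightarrow> bool" where
  "closed_arclength_curve f L \<longleftrightarrow> L > 0 \<and> smooth_curve f \<and>
     (\<forall>s. f (s + L) = f s) \<and> (\<forall>s. norm (vderiv f s) = 1)"

definition cdot :: "complex \<Rightarrow> complex \<Rightarrow> real" where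
  "cdot a b = Re (a * cnj b)"

definition tangent :: "(real \<Rightarrow> complex) \<Rightarrow> real \<Rightarrow> complex" where
  "tangent f s = vderiv f s"

definition normal :: "(real \<Rightarrow> complex) \<Rightarrow> real \<Rightarrow> complex" where
  "normal f s = \<i> * tangent f s"

definition curvature :: "(real \<Rightarrow> complex) \<Rightarrow> real \<Rightarrow> real" where
  "curvature f s = cdot (vderiv (vderiv f) s) (normal f s)"

definition rotation_number :: "(real \<Rightarrow> complex) \<Rightarrow> real \<Rightarrow> real" where
  "rotation_number f L = (1 / (2 * pi)) * integral {0..L} (curvature f)"

definition osc_curvature :: "(real \<Rightarrow> complex) \<Rightarrow> real \<Rightarrow> real \<Rightarrow> real" where
  "osc_curvature f L s = curvature f s - (1 / L) * integral {0..L} (curvature f)"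

definition I0 :: "(real \<Rightarrow> complex) \<Rightarrow> real \<Rightarrow> real" where
  "I0 f L = L * integral {0..L} (\<lambda>s. (osc_curvature f L s)\<^sup>2)"

definition fourier_coeff :: "(real \<Rightarrow> complex) \<Rightarrow> real \<Rightarrow> int \<Rightarrow> complex" where
  "fourier_coeff f L k = complex_of_real (1 / sqrt L) *
     integral {0..L} (\<lambda>s. f s * exp (- 2 * pi * \<i> * of_int k * of_real s / of_real L))"

definition is_n_fold_circle :: "(real \<Rightarrow> complex) \<Rightarrow> real \<Rightarrow> int \<Rightarrow> bool" where
  "is_n_fold_circle f L n \<longleftrightarrow> (\<exists>c r \<sigma>. r > 0 \<and>
     (\<forall>s. f s = c + of_real r * exp (2 * pi * \<i> * of_int n * of_real (s + \<sigma>) / of_real L)))"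

end

theory Submission
  imports Defs
begin


definition ee :: "real \<Rightarrow> int \<Rightarrow> real \<Rightarrow> complex" where
  "ee L k s = exp (2 * pi * \<i> * of_int k * of_real s / of_real L)"

definition trig :: "real \<Rightarrow> (real \<Rightarrow> complex) \<Rightarrow> bool" where
  "trig L h \<longleftrightarrow> (\<exists>F A. finite F \<and> (\<forall>s. h s = (\<Sum>k\<in>F. A k * ee L k s)))"

lemma ee_add: "ee L j s * ee L k s = ee L (j + k) s"
  unfolding ee_def by (simp add: exp_add[symmetric] algebra_simps add_divide_distrib)

lemma ee_cnj: "cnj (ee L k s) = ee L (-k) s"
  unfolding ee_def exp_cnj by (rule arg_cong[where f=exp]) (simp add: complex_eq_iff)

lemma trig_const: "trig L (\<lambda>s. c)"
  unfolding trig_def by (rule exI[of _ "{0}"], rule exI[of _ "\<lambda>_. c"]) (simp add: ee_def)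

lemma trig_mono: "trig L (\<lambda>s. c * ee L k s)"
  unfolding trig_def by (rule exI[of _ "{k}"], rule exI[of _ "\<lambda>_. c"]) simp

lemma trig_add:
  assumes "trig L g" "trig L h" shows "trig L (\<lambda>s. g s + h s)"
proof -
  obtain F A where F: "finite F" "\<And>s. g s = (\<Sum>k\<in>F. A k * ee L k s)" using assms(1) unfolding trig_def by blast
  obtain G B where G: "finite G" "\<And>s. h s = (\<Sum>k\<in>G. B k * ee L k s)" using assms(2) unfolding trig_def by blast
  define C where "C k = (if k \<in> F then A k else 0) + (if k \<in> G then B k else 0)" for k
  have "g s + h s = (\<Sum>k\<in>F \<union> G. C k * ee L k s)" for s
  proof -
    have 1: "(\<Sum>k\<in>F \<union> G. (if k \<in> F then A k else 0) * ee L k s) = (\<Sum>k\<in>F. A k * ee L k s)"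
      by (rule sum.mono_neutral_cong_right) (use F G in auto)
    have 2: "(\<Sum>k\<in>F \<union> G. (if k \<in> G then B k else 0) * ee L k s) = (\<Sum>k\<in>G. B k * ee L k s)"
      by (rule sum.mono_neutral_cong_right) (use F G in auto)
    show ?thesis unfolding C_def distrib_right sum.distrib 1 2 F G ..
  qed
  then show ?thesis unfolding trig_def using F G by blast
qed

lemma trig_sum:
  assumes "finite I" "\<And>i. i \<in> I \<Longrightarrow> trig L (u i)" shows "trig L (\<lambda>s. \<Sum>i\<in>I. u i s)"
  using assms
proof (induction I rule: finite_induct)
  case empty then show ?case using trig_const[of L 0] by simp
next
  case (insert x F) then show ?case by (simp add: trig_add)
qed

lemma trig_mono_mult:
  assumes "trig L h" shows "trig L (\<lambda>s. c * ee L j s * h s)"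
proof -
  obtain F A where F: "finite F" "\<And>s. h s = (\<Sum>k\<in>F. A k * ee L k s)" using assms unfolding trig_def by blast
  have "c * ee L j s * h s = (\<Sum>k\<in>F. c * A k * ee L (j + k) s)" for s
    unfolding F sum_distrib_left by (rule sum.cong) (auto simp: ee_add[symmetric] algebra_simps)
  then have "c * ee L j s * h s = (\<Sum>k\<in>F. (\<lambda>s. c * A k * ee L (j + k) s) s)" for s by simp
  moreover have "trig L (\<lambda>s. \<Sum>k\<in>F. c * A k * ee L (j + k) s)"
    by (rule trig_sum) (use F trig_mono in auto)
  ultimately show ?thesis by (metis (no_types, lifting) ext)
qed

lemma trig_mult:
  assumes "trig L g" "trig L h" shows "trig L (\<lambda>s. g s * h s)"
proof -
  obtain F A where F: "finite F" "\<And>s. g s = (\<Sum>k\<in>F. A k * ee L k s)" using assms(1) unfolding trig_def by blast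
  have "g s * h s = (\<Sum>k\<in>F. A k * ee L k s * h s)" for s unfolding F sum_distrib_right ..
  moreover have "trig L (\<lambda>s. \<Sum>k\<in>F. A k * ee L k s * h s)"
    by (rule trig_sum) (use F trig_mono_mult assms(2) in auto)
  ultimately show ?thesis by (metis (no_types, lifting) ext)
qed

lemma trig_real_poly:
  assumes "real_polynomial_function r" "L \<noteq> 0"
  shows "trig L (\<lambda>s. complex_of_real (r (exp (\<i> * of_real (2 * pi * s / L)))))"
  using assms(1)
proof induction
  case (linear f)
  interpret bounded_linear f by fact
  have fz: "f z = Re z * f 1 + Im z * f \<i>" for z
  proof -
    have "z = Re z *\<^sub>R 1 + Im z *\<^sub>R \<i>" by (simp add: complex_eq_iff)
    then have "f z = f (Re z *\<^sub>R 1 + Im z *\<^sub>R \<i>)" by simp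
    also have "\<dots> = Re z * f 1 + Im z * f \<i>" by (simp add: add scale)
    finally show ?thesis .
  qed
  have e1: "ee L 1 s = exp (\<i> * of_real (2 * pi * s / L))" for s
    unfolding ee_def by (simp add: field_simps)
  have e2: "ee L (-1) s = cnj (exp (\<i> * of_real (2 * pi * s / L)))" for s
    unfolding ee_cnj[of L 1 s, symmetric] e1 ..
  have "complex_of_real (f (exp (\<i> * of_real (2 * pi * s / L)))) =
     (f 1 / 2 - \<i> * f \<i> / 2) * ee L 1 s + (f 1 / 2 + \<i> * f \<i> / 2) * ee L (-1) s" for s
  proof -
    define w where "w = exp (\<i> * of_real (2 * pi * s / L))"
    have "complex_of_real (f w) = (f 1 / 2 - \<i> * f \<i> / 2) * w + (f 1 / 2 + \<i> * f \<i> / 2) * cnj w"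
      unfolding fz[of w] by (simp add: complex_eq_iff algebra_simps)
    then show ?thesis unfolding e1 e2 w_def .
  qed
  then show ?case using trig_add[OF trig_mono trig_mono] by (metis (no_types, lifting) ext)
next
  case (const c) then show ?case by (rule trig_const)
next
  case (add f g) then show ?case by (simp add: trig_add)
next
  case (mult f g) then show ?case by (simp add: trig_mult)
qed




lemma trig_approx:
  fixes g :: "real \<Rightarrow> complex"
  assumes L: "L > 0" and cont: "continuous_on {0..L} g" and per: "g L = g 0" and e: "e > 0"
  shows "\<exists>P. trig L P \<and> (\<forall>s\<in>{0..L}. norm (g s - P s) < e)"
proof -
  define p where "p s = exp (\<i> * of_real (2 * pi * s / L))" for s
  define S where "S = {0..L}"
  define T where "T = p ` S"
  define G where "G z = g (SOME s. s \<in> S \<and> p s = z)" for z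
  have same: "g s = g t" if "s \<in> S" "t \<in> S" "p s = p t" for s t
  proof -
    from that(3) obtain n :: int where n: "\<i> * of_real (2 * pi * s / L) = \<i> * of_real (2 * pi * t / L) + of_int (2 * n) * pi * \<i>"
      unfolding p_def exp_eq by blast
    then have "2 * pi * s / L = 2 * pi * t / L + 2 * n * pi"
      by (simp add: complex_eq_iff)
    then have "2 * pi * s = 2 * pi * t + 2 * n * pi * L" using L by (simp add: field_simps)
    then have "(2 * pi) * s = (2 * pi) * (t + n * L)" by (simp add: algebra_simps)
    then have st: "s = t + n * L" by simp
    have "n \<le> 1"
    proof (rule ccontr)
      assume "\<not> n \<le> 1" then have "real_of_int n \<ge> 2" by simp
      then have "n * L \<ge> 2 * L" using L by (simp add: mult_right_mono)
      then show False using st that(1,2) L unfolding S_def atLeastAtMost_iff by linarith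
    qed
    moreover have "n \<ge> -1"
    proof (rule ccontr)
      assume "\<not> n \<ge> -1" then have "real_of_int n \<le> -2" by simp
      then have "n * L \<le> -2 * L" using L mult_right_mono[of "real_of_int n" "-2" L] by simp
      then show False using st that(1,2) L unfolding S_def atLeastAtMost_iff by linarith
    qed
    ultimately have "n = -1 \<or> n = 0 \<or> n = 1" by auto
    then show ?thesis
    proof (elim disjE)
      assume "n = -1" then have "s = t - L" using st by simp
      then have "t = L" "s = 0" using that(1,2) unfolding S_def by auto
      then show ?thesis using per by simp
    next
      assume "n = 0" then show ?thesis using st by simp
    next
      assume "n = 1" then have "s = t + L" using st by simp
      then have "t = 0" "s = L" using that(1,2) unfolding S_def by auto
      then show ?thesis using per by simp
    qed
  qed
  have Gp: "G (p s) = g s" if "s \<in> S" for s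
  proof -
    have "\<exists>t. t \<in> S \<and> p t = p s" using that by blast
    then have "(SOME t. t \<in> S \<and> p t = p s) \<in> S \<and> p (SOME t. t \<in> S \<and> p t = p s) = p s"
      by (rule someI_ex)
    then show ?thesis unfolding G_def using same that by blast
  qed
  have contp: "continuous_on S p" unfolding p_def using L by (intro continuous_intros) auto
  have cS: "compact S" unfolding S_def by simp
  have quot: "quotient_map (top_of_set S) (top_of_set T) p"
  proof (rule continuous_imp_quotient_map)
    show "continuous_map (top_of_set S) (top_of_set T) p" using contp unfolding T_def by simp
    show "compact_space (top_of_set S)" using cS by (simp add: compact_space_subtopology)
    show "Hausdorff_space (top_of_set T)" by (simp add: Hausdorff_space_subtopology)
    show "p ` topspace (top_of_set S) = topspace (top_of_set T)" by (simp add: T_def)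
  qed
  have "continuous_on S (G \<circ> p)"
    by (rule continuous_on_cong[THEN iffD1, OF refl _ cont[folded S_def]]) (simp add: Gp)
  then have "continuous_map (top_of_set S) euclidean (G \<circ> p)" by simp
  from continuous_compose_quotient_map[OF quot this]
  have contG: "continuous_on T G" by simp
  have cT: "compact T" unfolding T_def using cS contp by (simp add: compact_continuous_image)
  obtain q :: "complex \<Rightarrow> complex" where q: "polynomial_function q" "\<forall>z\<in>T. norm (G z - q z) < e"
    using Stone_Weierstrass_polynomial_function[OF cT contG e] by blast
  have rRe: "real_polynomial_function (Re \<circ> q)" and rIm: "real_polynomial_function (Im \<circ> q)"
    using q(1) unfolding polynomial_function_def by (auto intro: bounded_linear_Re bounded_linear_Im)
  have t1: "trig L (\<lambda>s. complex_of_real ((Re \<circ> q) (p s)))"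
    using trig_real_poly[OF rRe] L unfolding p_def by simp
  have t2: "trig L (\<lambda>s. complex_of_real ((Im \<circ> q) (p s)))"
    using trig_real_poly[OF rIm] L unfolding p_def by simp
  have t2': "trig L (\<lambda>s. \<i> * ee L 0 s * complex_of_real ((Im \<circ> q) (p s)))"
    by (rule trig_mono_mult[OF t2])
  have "trig L (\<lambda>s. complex_of_real ((Re \<circ> q) (p s)) + \<i> * ee L 0 s * complex_of_real ((Im \<circ> q) (p s)))"
    by (rule trig_add[OF t1 t2'])
  moreover have "(\<lambda>s. complex_of_real ((Re \<circ> q) (p s)) + \<i> * ee L 0 s * complex_of_real ((Im \<circ> q) (p s))) = (\<lambda>s. q (p s))"
    by (auto simp: ee_def complex_eq_iff)
  ultimately have "trig L (\<lambda>s. q (p s))" by simp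
  moreover have "\<forall>s\<in>{0..L}. norm (g s - q (p s)) < e"
    using q(2) Gp unfolding T_def S_def by auto
  ultimately show ?thesis by blast
qed




lemma ee_alt: "ee L k s = exp ((2 * pi * \<i> * of_int k / of_real L) * of_real s)"
  unfolding ee_def by (simp add: field_simps)

lemma ee_cont [continuous_intros]: "continuous_on S (\<lambda>s. ee L k s)"
  unfolding ee_alt by (intro continuous_intros)

lemma ee_deriv: "((\<lambda>s. ee L k s) has_vector_derivative (2 * pi * \<i> * of_int k / of_real L) * ee L k s) (at s within S)"
proof -
  define c where "c = 2 * pi * \<i> * of_int k / of_real L"
  have "((\<lambda>z. exp (c * z)) has_field_derivative c * exp (c * of_real s)) (at (of_real s))"
    by (auto intro!: derivative_eq_intros)
  from has_vector_derivative_real_field[OF this]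
  have "((\<lambda>x. exp (c * of_real x)) has_vector_derivative c * exp (c * of_real s)) (at s within S)" .
  moreover have "ee L k x = exp (c * of_real x)" for x unfolding ee_def c_def by (simp add: field_simps)
  ultimately show ?thesis unfolding c_def by simp
qed

lemma ee_0 [simp]: "ee L k 0 = 1" unfolding ee_def by simp

lemma ee_L [simp]: "L \<noteq> 0 \<Longrightarrow> ee L k L = 1"
proof -
  assume L: "L \<noteq> 0"
  have "ee L k L = exp ((2 * of_int k * pi) * \<i>)" unfolding ee_def using L by (simp add: field_simps)
  also have "\<dots> = 1" by (rule exp_integer_2pi) simp
  finally show ?thesis .
qed

lemma ee_mult_cnj: "ee L j s * cnj (ee L k s) = ee L (j - k) s"
  unfolding ee_cnj ee_add by simp

lemma ee_integral:
  assumes L: "L > 0"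
  shows "integral {0..L} (\<lambda>s. ee L m s) = (if m = 0 then of_real L else 0)"
proof (cases "m = 0")
  case True then show ?thesis using L by (simp add: ee_def scaleR_conv_of_real)
next
  case False
  define c where "c = 2 * pi * \<i> * of_int m / of_real L"
  have c0: "c \<noteq> 0" using False L unfolding c_def by simp
  have "((\<lambda>s. c * ee L m s / c) has_integral (ee L m L / c - ee L m 0 / c)) {0..L}"
    apply (rule fundamental_theorem_of_calculus)
    using L apply simp
    using ee_deriv[of L m] unfolding c_def[symmetric]
    by (auto intro!: derivative_eq_intros)
  then have "((\<lambda>s. ee L m s) has_integral 0) {0..L}" using c0 L by simp
  then show ?thesis using False by (simp add: integral_unique)
qed

lemma ee_orth:
  assumes L: "L > 0"
  shows "integral {0..L} (\<lambda>s. ee L j s * cnj (ee L k s)) = (if j = k then of_real L else 0)"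
  unfolding ee_mult_cnj ee_integral[OF L] by simp

lemma int_cmult: "f integrable_on S \<Longrightarrow> integral S (\<lambda>x. c * f x) = (c::complex) * integral S f"
  by (rule integral_unique) (intro has_integral_mult_right integrable_integral)

lemma int_of_real: "f integrable_on S \<Longrightarrow> integral S (\<lambda>x. complex_of_real (f x)) = of_real (integral S f)"
  by (rule integral_unique) (use has_integral_of_real[of f "integral S f" S] integrable_integral in auto)




definition CC :: "real \<Rightarrow> (real \<Rightarrow> complex) \<Rightarrow> int \<Rightarrow> complex" where
  "CC L g k = integral {0..L} (\<lambda>s. g s * cnj (ee L k s))"

lemma approx_identity:
  assumes L: "L > 0" and g: "continuous_on {0..L} g" and F: "finite F"
  shows "integral {0..L} (\<lambda>s. (norm (g s - (\<Sum>k\<in>F. A k * ee L k s)))\<^sup>2) =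
    integral {0..L} (\<lambda>s. (norm (g s))\<^sup>2) - (\<Sum>k\<in>F. (norm (CC L g k))\<^sup>2) / L
    + L * (\<Sum>k\<in>F. (norm (A k - CC L g k / L))\<^sup>2)"
proof -
  define P where "P s = (\<Sum>k\<in>F. A k * ee L k s)" for s
  define c where "c k = CC L g k" for k
  have cP: "continuous_on {0..L} P" unfolding P_def by (intro continuous_intros)
  have intg: "(\<lambda>s. u s * cnj (v s)) integrable_on {0..L}"
    if "continuous_on {0..L} u" "continuous_on {0..L} v" for u v
    by (rule integrable_continuous_interval) (use that in \<open>intro continuous_intros\<close>)
  have intee: "(\<lambda>s. g s * cnj (ee L k s)) integrable_on {0..L}" for k
    by (rule intg[OF g]) (intro continuous_intros)
  have h1: "integral {0..L} (\<lambda>s. g s * cnj (P s)) = (\<Sum>k\<in>F. cnj (A k) * c k)"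
  proof -
    have "g s * cnj (P s) = (\<Sum>k\<in>F. cnj (A k) * (g s * cnj (ee L k s)))" for s
      unfolding P_def cnj_sum sum_distrib_left by (rule sum.cong) auto
    then have "integral {0..L} (\<lambda>s. g s * cnj (P s)) = integral {0..L} (\<lambda>s. \<Sum>k\<in>F. cnj (A k) * (g s * cnj (ee L k s)))"
      by simp
    also have "\<dots> = (\<Sum>k\<in>F. integral {0..L} (\<lambda>s. cnj (A k) * (g s * cnj (ee L k s))))"
      by (rule integral_sum[OF F]) (intro integrable_on_mult_right intee)
    also have "\<dots> = (\<Sum>k\<in>F. cnj (A k) * c k)"
      unfolding c_def CC_def by (rule sum.cong[OF refl], rule int_cmult[OF intee])
    finally show ?thesis .
  qed
  have h2: "integral {0..L} (\<lambda>s. P s * cnj (P s)) = of_real L * (\<Sum>k\<in>F. A k * cnj (A k))"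
  proof -
    have intjk: "(\<lambda>s. ee L j s * cnj (ee L k s)) integrable_on {0..L}" for j k
      by (rule intg) (intro continuous_intros)+
    have "P s * cnj (P s) = (\<Sum>j\<in>F. \<Sum>k\<in>F. A j * cnj (A k) * (ee L j s * cnj (ee L k s)))" for s
      unfolding P_def cnj_sum sum_product
      by (rule sum.cong[OF refl], rule sum.cong[OF refl]) (simp add: algebra_simps)
    then have "integral {0..L} (\<lambda>s. P s * cnj (P s)) =
       integral {0..L} (\<lambda>s. \<Sum>j\<in>F. \<Sum>k\<in>F. A j * cnj (A k) * (ee L j s * cnj (ee L k s)))" by simp
    also have "\<dots> = (\<Sum>j\<in>F. integral {0..L} (\<lambda>s. \<Sum>k\<in>F. A j * cnj (A k) * (ee L j s * cnj (ee L k s))))"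
      by (rule integral_sum[OF F]) (intro integrable_sum[OF F] integrable_on_mult_right intjk)
    also have "\<dots> = (\<Sum>j\<in>F. \<Sum>k\<in>F. A j * cnj (A k) * (if j = k then of_real L else 0))"
    proof (rule sum.cong[OF refl])
      fix j assume "j \<in> F"
      have "integral {0..L} (\<lambda>s. \<Sum>k\<in>F. A j * cnj (A k) * (ee L j s * cnj (ee L k s)))
          = (\<Sum>k\<in>F. integral {0..L} (\<lambda>s. A j * cnj (A k) * (ee L j s * cnj (ee L k s))))"
        by (rule integral_sum[OF F]) (intro integrable_on_mult_right intjk)
      also have "\<dots> = (\<Sum>k\<in>F. A j * cnj (A k) * (if j = k then of_real L else 0))"
        by (rule sum.cong[OF refl]) (simp add: int_cmult[OF intjk] ee_orth[OF L])
      finally show "integral {0..L} (\<lambda>s. \<Sum>k\<in>F. A j * cnj (A k) * (ee L j s * cnj (ee L k s)))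
          = (\<Sum>k\<in>F. A j * cnj (A k) * (if j = k then of_real L else 0))" .
    qed
    also have "\<dots> = (\<Sum>j\<in>F. A j * cnj (A j) * of_real L)"
      by (rule sum.cong[OF refl]) (simp add: F if_distrib cong: if_cong)
    also have "\<dots> = of_real L * (\<Sum>k\<in>F. A k * cnj (A k))"
      by (simp add: sum_distrib_left algebra_simps)
    finally show ?thesis .
  qed
  have h3: "integral {0..L} (\<lambda>s. P s * cnj (g s)) = (\<Sum>k\<in>F. A k * cnj (c k))"
  proof -
    have "integral {0..L} (\<lambda>s. P s * cnj (g s)) = cnj (integral {0..L} (\<lambda>s. g s * cnj (P s)))"
      by (simp add: integral_cnj mult.commute)
    then show ?thesis unfolding h1 by (simp add: cnj_sum)
  qed
  have "complex_of_real (integral {0..L} (\<lambda>s. (norm (g s - P s))\<^sup>2)) =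
      integral {0..L} (\<lambda>s. complex_of_real ((norm (g s - P s))\<^sup>2))"
    by (rule int_of_real[symmetric], rule integrable_continuous_interval) (use g cP in \<open>intro continuous_intros\<close>)
  also have "\<dots> = integral {0..L} (\<lambda>s. (g s * cnj (g s) - g s * cnj (P s)) - (P s * cnj (g s) - P s * cnj (P s)))"
    by (rule integral_cong) (simp only: complex_norm_square, simp add: algebra_simps)
  also have "\<dots> = (integral {0..L} (\<lambda>s. g s * cnj (g s)) - integral {0..L} (\<lambda>s. g s * cnj (P s))) -
      (integral {0..L} (\<lambda>s. P s * cnj (g s)) - integral {0..L} (\<lambda>s. P s * cnj (P s)))"
    using intg[OF g g] intg[OF g cP] intg[OF cP g] intg[OF cP cP]
    by (simp add: integral_diff integrable_diff)
  also have "integral {0..L} (\<lambda>s. g s * cnj (g s)) = complex_of_real (integral {0..L} (\<lambda>s. (norm (g s))\<^sup>2))"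
  proof -
    have "integral {0..L} (\<lambda>s. g s * cnj (g s)) = integral {0..L} (\<lambda>s. complex_of_real ((norm (g s))\<^sup>2))"
      by (simp only: complex_norm_square)
    also have "\<dots> = complex_of_real (integral {0..L} (\<lambda>s. (norm (g s))\<^sup>2))"
      by (rule int_of_real, rule integrable_continuous_interval) (use g in \<open>intro continuous_intros\<close>)
    finally show ?thesis .
  qed
  finally have E: "complex_of_real (integral {0..L} (\<lambda>s. (norm (g s - P s))\<^sup>2)) =
     complex_of_real (integral {0..L} (\<lambda>s. (norm (g s))\<^sup>2)) - (\<Sum>k\<in>F. cnj (A k) * c k)
      - (\<Sum>k\<in>F. A k * cnj (c k)) + of_real L * (\<Sum>k\<in>F. A k * cnj (A k))"
    unfolding h1 h2 h3 by simp
  have pt: "complex_of_real (L * (norm (A k - c k / L))\<^sup>2) =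
      of_real L * (A k * cnj (A k)) - cnj (A k) * c k - A k * cnj (c k) + complex_of_real ((norm (c k))\<^sup>2) / of_real L" for k
    using L unfolding of_real_mult complex_norm_square by (simp add: field_simps)
  have R: "complex_of_real (L * (\<Sum>k\<in>F. (norm (A k - c k / L))\<^sup>2)) =
      of_real L * (\<Sum>k\<in>F. A k * cnj (A k)) - (\<Sum>k\<in>F. cnj (A k) * c k) - (\<Sum>k\<in>F. A k * cnj (c k))
      + complex_of_real (\<Sum>k\<in>F. (norm (c k))\<^sup>2) / of_real L"
  proof -
    have "complex_of_real (L * (\<Sum>k\<in>F. (norm (A k - c k / L))\<^sup>2)) = (\<Sum>k\<in>F. complex_of_real (L * (norm (A k - c k / L))\<^sup>2))"
      by (simp only: sum_distrib_left of_real_sum)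
    also have "\<dots> = (\<Sum>k\<in>F. of_real L * (A k * cnj (A k)) - cnj (A k) * c k - A k * cnj (c k) + complex_of_real ((norm (c k))\<^sup>2) / of_real L)"
      by (rule sum.cong[OF refl]) (rule pt)
    also have "\<dots> = of_real L * (\<Sum>k\<in>F. A k * cnj (A k)) - (\<Sum>k\<in>F. cnj (A k) * c k) - (\<Sum>k\<in>F. A k * cnj (c k))
      + complex_of_real (\<Sum>k\<in>F. (norm (c k))\<^sup>2) / of_real L"
      by (simp only: sum.distrib sum_subtractf sum_divide_distrib sum_distrib_left of_real_sum)
    finally show ?thesis .
  qed
  have "complex_of_real (integral {0..L} (\<lambda>s. (norm (g s - P s))\<^sup>2)) =
      complex_of_real (integral {0..L} (\<lambda>s. (norm (g s))\<^sup>2) - (\<Sum>k\<in>F. (norm (c k))\<^sup>2) / L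
    + L * (\<Sum>k\<in>F. (norm (A k - c k / L))\<^sup>2))"
    unfolding E of_real_add of_real_diff R by (simp add: of_real_divide)
  then show ?thesis unfolding P_def c_def of_real_eq_iff .
qed




lemma has_sum_nonneg_sup:
  fixes f :: "'a \<Rightarrow> real"
  assumes nn: "\<And>x. f x \<ge> 0" and ub: "\<And>F. finite F \<Longrightarrow> sum f F \<le> S"
    and ap: "\<And>e. e > 0 \<Longrightarrow> \<exists>F. finite F \<and> sum f F > S - e"
  shows "(f has_sum S) UNIV"
  unfolding has_sum_def
proof (rule order_tendstoI)
  fix a assume "a < S"
  then obtain F0 where F0: "finite F0" "sum f F0 > a" using ap[of "S - a"] by auto
  show "\<forall>\<^sub>F X in finite_subsets_at_top UNIV. a < sum f X"
    unfolding eventually_finite_subsets_at_top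
  proof (intro exI[of _ F0] conjI allI impI)
    fix Y assume Y: "finite Y \<and> F0 \<subseteq> Y \<and> Y \<subseteq> UNIV"
    have "sum f F0 \<le> sum f Y" using Y nn by (intro sum_mono2) auto
    then show "a < sum f Y" using F0 by simp
  qed (use F0 in auto)
next
  fix a assume "a > S"
  then show "\<forall>\<^sub>F X in finite_subsets_at_top UNIV. sum f X < a"
    using ub by (intro eventually_finite_subsets_at_top_weakI) (metis le_less_trans)
qed

lemma parseval:
  fixes g :: "real \<Rightarrow> complex"
  assumes L: "L > 0" and g: "continuous_on {0..L} g" and per: "g L = g 0"
  shows "((\<lambda>k. (norm (CC L g k))\<^sup>2 / L) has_sum integral {0..L} (\<lambda>s. (norm (g s))\<^sup>2)) UNIV"
proof (rule has_sum_nonneg_sup)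
  define N where "N = integral {0..L} (\<lambda>s. (norm (g s))\<^sup>2)"
  show "(norm (CC L g k))\<^sup>2 / L \<ge> 0" for k using L by simp
  have nonneg: "integral {0..L} (\<lambda>s. (norm (g s - P s))\<^sup>2) \<ge> 0" if "continuous_on {0..L} P" for P
    by (rule integral_nonneg) (use g that in \<open>auto intro!: integrable_continuous_interval continuous_intros\<close>)
  show "(\<Sum>k\<in>F. (norm (CC L g k))\<^sup>2 / L) \<le> N" if F: "finite F" for F
  proof -
    have "0 \<le> integral {0..L} (\<lambda>s. (norm (g s - (\<Sum>k\<in>F. (CC L g k / L) * ee L k s)))\<^sup>2)"
      by (rule nonneg) (intro continuous_intros)
    also have "\<dots> = N - (\<Sum>k\<in>F. (norm (CC L g k))\<^sup>2) / L"
      unfolding approx_identity[OF L g F] N_def by simp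
    finally show ?thesis by (simp add: sum_divide_distrib)
  qed
  show "\<exists>F. finite F \<and> (\<Sum>k\<in>F. (norm (CC L g k))\<^sup>2 / L) > N - e" if e: "e > 0" for e
  proof -
    define d where "d = sqrt (e / (2 * L))"
    have d: "d > 0" using e L unfolding d_def by simp
    have d2: "L * d\<^sup>2 < e" using e L unfolding d_def by (simp add: field_simps)
    obtain P where P: "trig L P" "\<forall>s\<in>{0..L}. norm (g s - P s) < d"
      using trig_approx[OF L g per d] by blast
    obtain F A where F: "finite F" "\<And>s. P s = (\<Sum>k\<in>F. A k * ee L k s)" using P(1) unfolding trig_def by blast
    have "integral {0..L} (\<lambda>s. (norm (g s - P s))\<^sup>2) \<le> integral {0..L} (\<lambda>s. d\<^sup>2)"
    proof (rule integral_le)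
      show "(\<lambda>s. (norm (g s - P s))\<^sup>2) integrable_on {0..L}"
        unfolding F(2) by (rule integrable_continuous_interval) (use g in \<open>intro continuous_intros\<close>)
      show "(\<lambda>s. d\<^sup>2) integrable_on {0..L}" by (rule integrable_continuous_interval) (intro continuous_intros)
      show "(norm (g s - P s))\<^sup>2 \<le> d\<^sup>2" if "s \<in> {0..L}" for s
        using P(2) that by (intro power_mono) (auto simp: less_imp_le)
    qed
    also have "\<dots> = L * d\<^sup>2" using L by simp
    finally have le: "integral {0..L} (\<lambda>s. (norm (g s - P s))\<^sup>2) \<le> L * d\<^sup>2" .
    have "integral {0..L} (\<lambda>s. (norm (g s - P s))\<^sup>2) =
      N - (\<Sum>k\<in>F. (norm (CC L g k))\<^sup>2) / L + L * (\<Sum>k\<in>F. (norm (A k - CC L g k / L))\<^sup>2)"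
      unfolding F(2) approx_identity[OF L g F(1)] N_def ..
    moreover have "L * (\<Sum>k\<in>F. (norm (A k - CC L g k / L))\<^sup>2) \<ge> 0"
      using L by (intro mult_nonneg_nonneg sum_nonneg) auto
    ultimately have "N - (\<Sum>k\<in>F. (norm (CC L g k))\<^sup>2) / L < e" using le d2 by linarith
    then show ?thesis using F(1) by (intro exI[of _ F]) (simp add: sum_divide_distrib)
  qed
qed




lemma has_sum_diff':
  fixes f g :: "'a \<Rightarrow> real"
  assumes "(f has_sum a) A" "(g has_sum b) A"
  shows "((\<lambda>x. f x - g x) has_sum (a - b)) A"
  using has_sum_add[OF assms(1) has_sum_uminusI[OF assms(2)]] by simp

lemma CC_add:
  assumes "continuous_on {0..L} a" "continuous_on {0..L} b"
  shows "CC L (\<lambda>s. a s + b s) k = CC L a k + CC L b k"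
  unfolding CC_def distrib_right
  by (rule integral_add; rule integrable_continuous_interval; use assms in \<open>intro continuous_intros\<close>)

lemma CC_cmult:
  assumes "continuous_on {0..L} a"
  shows "CC L (\<lambda>s. c * a s) k = c * CC L a k"
  unfolding CC_def mult.assoc
  by (rule int_cmult; rule integrable_continuous_interval; use assms in \<open>intro continuous_intros\<close>)

lemma polarization:
  fixes a b :: "real \<Rightarrow> complex"
  assumes L: "L > 0" and a: "continuous_on {0..L} a" "a L = a 0"
    and b: "continuous_on {0..L} b" "b L = b 0"
  shows "((\<lambda>k. Re (CC L a k * cnj (CC L b k)) / L) has_sum integral {0..L} (\<lambda>s. Re (a s * cnj (b s)))) UNIV"
proof -
  have ab: "continuous_on {0..L} (\<lambda>s. a s + b s)" using a b by (intro continuous_intros)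
  have sq: "(norm (x + y))\<^sup>2 = (norm x)\<^sup>2 + (norm y)\<^sup>2 + 2 * Re (x * cnj y)" for x y :: complex
    unfolding cmod_power2 by (simp add: power2_eq_square algebra_simps)
  have P1: "((\<lambda>k. (norm (CC L (\<lambda>s. a s + b s) k))\<^sup>2 / L) has_sum integral {0..L} (\<lambda>s. (norm (a s + b s))\<^sup>2)) UNIV"
    using parseval[OF L ab] a b by simp
  note P2 = parseval[OF L a(1,2)] and P3 = parseval[OF L b(1,2)]
  have H: "((\<lambda>k. ((norm (CC L (\<lambda>s. a s + b s) k))\<^sup>2 / L - (norm (CC L a k))\<^sup>2 / L - (norm (CC L b k))\<^sup>2 / L) * (1/2))
     has_sum ((integral {0..L} (\<lambda>s. (norm (a s + b s))\<^sup>2) - integral {0..L} (\<lambda>s. (norm (a s))\<^sup>2) - integral {0..L} (\<lambda>s. (norm (b s))\<^sup>2)) * (1/2))) UNIV"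
    by (intro has_sum_cmult_left has_sum_diff' P1 P2 P3)
  have e1: "((norm (CC L (\<lambda>s. a s + b s) k))\<^sup>2 / L - (norm (CC L a k))\<^sup>2 / L - (norm (CC L b k))\<^sup>2 / L) * (1/2)
     = Re (CC L a k * cnj (CC L b k)) / L" for k
    unfolding CC_add[OF a(1) b(1)] sq using L by (simp add: field_simps)
  have int: "(\<lambda>s. f s) integrable_on {0..L}" if "continuous_on {0..L} f" for f :: "real \<Rightarrow> real"
    using that by (rule integrable_continuous_interval)
  have e2: "(integral {0..L} (\<lambda>s. (norm (a s + b s))\<^sup>2) - integral {0..L} (\<lambda>s. (norm (a s))\<^sup>2) - integral {0..L} (\<lambda>s. (norm (b s))\<^sup>2)) * (1/2)
     = integral {0..L} (\<lambda>s. Re (a s * cnj (b s)))"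
  proof -
    have "integral {0..L} (\<lambda>s. (norm (a s + b s))\<^sup>2) = integral {0..L} (\<lambda>s. ((norm (a s))\<^sup>2 + (norm (b s))\<^sup>2) + 2 * Re (a s * cnj (b s)))"
      unfolding sq ..
    also have "\<dots> = (integral {0..L} (\<lambda>s. (norm (a s))\<^sup>2) + integral {0..L} (\<lambda>s. (norm (b s))\<^sup>2)) + 2 * integral {0..L} (\<lambda>s. Re (a s * cnj (b s)))"
      using a b by (simp add: integral_add int continuous_intros integrable_add)
    finally show ?thesis by simp
  qed
  show ?thesis using H unfolding e1 e2 .
qed




lemma vd_cont_on:
  assumes "\<And>x. (g has_vector_derivative g' x) (at x)"
  shows "continuous_on S g"
  by (rule continuous_at_imp_continuous_on) (use assms has_vector_derivative_continuous in blast)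

lemma CC_deriv:
  fixes g g' :: "real \<Rightarrow> complex"
  assumes L: "L > 0" and d: "\<And>x. (g has_vector_derivative g' x) (at x)"
    and cg': "continuous_on {0..L} g'" and per: "g L = g 0"
  shows "CC L g' k = (2 * pi * \<i> * of_int k / of_real L) * CC L g k"
proof -
  define c where "c = 2 * pi * \<i> * of_int k / of_real L"
  have cc: "cnj c = - c" unfolding c_def by (simp add: complex_eq_iff)
  have cg: "continuous_on {0..L} g" by (rule vd_cont_on[OF d])
  have "((\<lambda>s. g s * (cnj c * cnj (ee L k s)) + g' s * cnj (ee L k s)) has_integral
        (g L * cnj (ee L k L) - g 0 * cnj (ee L k 0))) {0..L}"
  proof (rule fundamental_theorem_of_calculus)
    show "0 \<le> L" using L by simp
    fix x assume "x \<in> {0..L}"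
    have e: "((\<lambda>s. cnj (ee L k s)) has_vector_derivative cnj (c * ee L k x)) (at x within {0..L})"
      using ee_deriv[of L k x "{0..L}"] unfolding c_def by (rule has_vector_derivative_cnj)
    show "((\<lambda>s. g s * cnj (ee L k s)) has_vector_derivative
        g x * (cnj c * cnj (ee L k x)) + g' x * cnj (ee L k x)) (at x within {0..L})"
      using has_vector_derivative_mult[OF has_vector_derivative_at_within[OF d] e] by simp
  qed
  then have "((\<lambda>s. g s * (cnj c * cnj (ee L k s)) + g' s * cnj (ee L k s)) has_integral 0) {0..L}"
    using per L by simp
  then have "integral {0..L} (\<lambda>s. g s * (cnj c * cnj (ee L k s)) + g' s * cnj (ee L k s)) = 0"
    by (rule integral_unique)
  moreover have "integral {0..L} (\<lambda>s. g s * (cnj c * cnj (ee L k s)) + g' s * cnj (ee L k s)) =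
     cnj c * CC L g k + CC L g' k"
  proof -
    have i1: "(\<lambda>s. g s * cnj (ee L k s)) integrable_on {0..L}"
      by (rule integrable_continuous_interval) (use cg in \<open>intro continuous_intros\<close>)
    have i2: "(\<lambda>s. g' s * cnj (ee L k s)) integrable_on {0..L}"
      by (rule integrable_continuous_interval) (use cg' in \<open>intro continuous_intros\<close>)
    have "integral {0..L} (\<lambda>s. g s * (cnj c * cnj (ee L k s)) + g' s * cnj (ee L k s)) =
        integral {0..L} (\<lambda>s. cnj c * (g s * cnj (ee L k s))) + integral {0..L} (\<lambda>s. g' s * cnj (ee L k s))"
      by (simp add: integral_add integrable_on_mult_right i1 i2 algebra_simps)
    then show ?thesis unfolding CC_def int_cmult[OF i1] .
  qed
  ultimately show ?thesis unfolding cc c_def by (simp add: add_eq_0_iff)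
qed




lemma vderiv_periodic:
  assumes per: "\<And>s. g (s + L) = g s" and d: "g differentiable (at (s + L))"
  shows "vderiv g (s + L) = vderiv g s"
proof -
  have 1: "(g has_vector_derivative vderiv g (s + L)) (at (s + L))"
    using d unfolding vderiv_def by (simp add: vector_derivative_works)
  have 2: "((\<lambda>x. x + L) has_vector_derivative 1) (at s)"
    by (auto intro!: derivative_eq_intros)
  have "((g \<circ> (\<lambda>x. x + L)) has_vector_derivative (1 *\<^sub>R vderiv g (s + L))) (at s)"
    by (rule vector_diff_chain_at[OF 2]) (use 1 in simp)
  moreover have "g \<circ> (\<lambda>x. x + L) = g" using per by (auto simp: fun_eq_iff)
  ultimately have "(g has_vector_derivative vderiv g (s + L)) (at s)" by simp
  then show ?thesis unfolding vderiv_def by (simp add: vector_derivative_at)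
qed

lemma per_nat:
  fixes h :: "real \<Rightarrow> 'a" and L s :: real
  assumes "\<And>s. h (s + L) = h s" shows "h (s + of_nat m * L) = h s"
proof (induction m)
  case (Suc m)
  have "h (s + of_nat (Suc m) * L) = h ((s + of_nat m * L) + L)" by (simp add: algebra_simps)
  then show ?case using assms Suc by simp
qed simp

lemma per_int:
  fixes h :: "real \<Rightarrow> 'a" and L s :: real
  assumes "\<And>s. h (s + L) = h s" shows "h (s + of_int m * L) = h s"
proof (cases "m \<ge> 0")
  case True
  then obtain k where "m = int k" by (metis nonneg_eq_int)
  then show ?thesis using per_nat[of h L, OF assms] by simp
next
  case False
  define k where "k = nat (- m)"
  have k: "m = - int k" using False unfolding k_def by simp
  have "h s = h ((s + of_int m * L) + of_nat k * L)" using k by simp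
  also have "\<dots> = h (s + of_int m * L)" by (rule per_nat[of h L, OF assms])
  finally show ?thesis by simp
qed

lemma per_ext:
  fixes h :: "real \<Rightarrow> 'a" and L s :: real
  assumes L: "L > 0" and per: "\<And>s. h (s + L) = h s" and c: "\<And>s. s \<in> {0..L} \<Longrightarrow> h s = c"
  shows "h s = c"
proof -
  define m where "m = \<lfloor>s / L\<rfloor>"
  define t where "t = s - of_int m * L"
  have "of_int m \<le> s / L" "s / L < of_int m + 1" using floor_correct[of "s / L"] unfolding m_def by auto
  then have "of_int m * L \<le> s" "s < (of_int m + 1) * L" using L by (simp_all add: field_simps)
  then have "t \<in> {0..L}" unfolding t_def by (auto simp: algebra_simps)
  moreover have "h s = h (t + of_int m * L)" unfolding t_def by simp
  ultimately show ?thesis using per_int[of h L, OF per] c by simp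
qed

locale curve =
  fixes f :: "real \<Rightarrow> complex" and L :: real and n :: int
  assumes cl: "closed_arclength_curve f L"
    and rot: "rotation_number f L = of_int n"
    and n1: "n \<ge> 1"
begin

abbreviation "f1 \<equiv> vderiv f"
abbreviation "f2 \<equiv> vderiv (vderiv f)"
abbreviation "\<kappa> \<equiv> curvature f"

lemma L: "L > 0" using cl unfolding closed_arclength_curve_def by simp
lemma perf: "f (s + L) = f s" using cl unfolding closed_arclength_curve_def by simp
lemma norm1: "norm (f1 s) = 1" using cl unfolding closed_arclength_curve_def by simp

lemma diff: "((vderiv ^^ k) f) differentiable (at x)"
  using cl unfolding closed_arclength_curve_def smooth_curve_def by simp

lemma d0: "(f has_vector_derivative f1 x) (at x)"
  using diff[of 0 x] unfolding vderiv_def by (simp add: vector_derivative_works)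
lemma d1: "(f1 has_vector_derivative f2 x) (at x)"
  using diff[of 1 x] unfolding vderiv_def by (simp add: vector_derivative_works)
lemma cont_f1: "continuous_on S f1" by (rule vd_cont_on[OF d1])
lemma cont_f2: "continuous_on S f2"
proof -
  have "f2 differentiable (at x)" for x using diff[of 2 x] by (simp add: numeral_2_eq_2)
  then show ?thesis by (simp add: continuous_at_imp_continuous_on differentiable_imp_continuous_within)
qed
lemma per1: "f1 (s + L) = f1 s"
  using vderiv_periodic[of f L s] perf diff[of 0 "s + L"] by simp
lemma per2: "f2 (s + L) = f2 s"
  using vderiv_periodic[of f1 L s] per1 diff[of 1 "s + L"] by simp

lemma kappa_rel: "f2 s = \<i> * of_real (\<kappa> s) * f1 s"
proof -
  have u: "f1 x * cnj (f1 x) = 1" for x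
    using norm1[of x] complex_norm_square[of "f1 x"] by simp
  have "((\<lambda>x. f1 x * cnj (f1 x)) has_vector_derivative (f1 s * cnj (f2 s) + f2 s * cnj (f1 s))) (at s)"
    using has_vector_derivative_mult[OF d1 has_vector_derivative_cnj[OF d1]] by simp
  moreover have "((\<lambda>x. f1 x * cnj (f1 x)) has_vector_derivative 0) (at s)"
    unfolding u by (rule has_vector_derivative_const)
  ultimately have z: "f1 s * cnj (f2 s) + f2 s * cnj (f1 s) = 0"
    using vector_derivative_unique_at by blast
  define w where "w = f2 s * cnj (f1 s)"
  have "Re w = 0" using arg_cong[OF z, of Re] unfolding w_def by (simp add: algebra_simps)
  moreover have "Im w = \<kappa> s"
    unfolding w_def curvature_def cdot_def normal_def tangent_def by simp
  ultimately have "w = \<i> * of_real (\<kappa> s)" by (simp add: complex_eq_iff)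
  moreover have "f2 s = w * f1 s" unfolding w_def using u[of s] by (simp add: mult.assoc mult.commute[of "cnj _"])
  ultimately show ?thesis by simp
qed

end



lemma alg1: fixes L K M x :: real assumes "L > 0"
  shows "((2*pi/L)^2 * K * M)^2 * (L * x) = 16*pi^4/L^3 * (K^2 * M^2 * x)"
  using assms by (simp add: field_simps eval_nat_numeral)

lemma alg2: fixes L K M x n :: real assumes "L > 0"
  shows "(2*pi/L)^3 * K^2 * M * x * (2 * pi * n) = 16*pi^4/L^3 * (n * K^2 * M * x)"
  using assms by (simp add: field_simps eval_nat_numeral)

context curve begin

lemma intk: "integral {0..L} \<kappa> = 2 * pi * n"
  using rot unfolding rotation_number_def by (simp add: field_simps)

lemma osc_eq: "osc_curvature f L s = \<kappa> s - 2 * pi * n / L"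
  unfolding osc_curvature_def intk by simp

lemma kappa_def2: "\<kappa> s = Re (f2 s * cnj (\<i> * f1 s))"
  unfolding curvature_def cdot_def normal_def tangent_def ..

lemma cont_kappa: "continuous_on S \<kappa>"
  unfolding kappa_def2 using cont_f1 cont_f2 by (intro continuous_intros)

definition "hh s = f2 s + (- \<i> * of_real (2 * pi * n / L)) * f1 s"

lemma hh_eq: "hh s = \<i> * of_real (osc_curvature f L s) * f1 s"
  unfolding hh_def osc_eq kappa_rel by (simp add: algebra_simps)

lemma norm_hh: "(norm (hh s))\<^sup>2 = (osc_curvature f L s)\<^sup>2"
  unfolding hh_eq by (simp add: norm_mult norm1)

lemma cont_hh: "continuous_on S hh"
  unfolding hh_def using cont_f1 cont_f2 by (intro continuous_intros)

lemma per_hh: "hh L = hh 0"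
  unfolding hh_def using per1[of 0] per2[of 0] by simp

lemma I0_hh: "I0 f L = L * integral {0..L} (\<lambda>s. (norm (hh s))\<^sup>2)"
  unfolding I0_def norm_hh ..

lemma CC_f1: "CC L f1 k = (2 * pi * \<i> * of_int k / of_real L) * CC L f k"
  by (rule CC_deriv[OF L d0 cont_f1]) (use perf[of 0] in simp)

lemma CC_f2: "CC L f2 k = (2 * pi * \<i> * of_int k / of_real L) * CC L f1 k"
  by (rule CC_deriv[OF L d1 cont_f2]) (use per1[of 0] in simp)

lemma CC_hh: "CC L hh k = of_real (- (2 * pi / L)\<^sup>2 * of_int k * of_int (k - n)) * CC L f k"
proof -
  define c where "c = - \<i> * of_real (2 * pi * n / L)"
  have e: "hh = (\<lambda>s. f2 s + c * f1 s)" by (simp add: hh_def fun_eq_iff c_def)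
  have "CC L hh k = CC L f2 k + CC L (\<lambda>s. c * f1 s) k"
    unfolding e by (rule CC_add[OF cont_f2]) (intro continuous_intros cont_f1)
  also have "\<dots> = CC L f2 k + (- \<i> * of_real (2 * pi * n / L)) * CC L f1 k"
    unfolding CC_cmult[OF cont_f1] c_def ..
  also have "\<dots> = of_real (- (2 * pi / L)\<^sup>2 * of_int k * of_int (k - n)) * CC L f k"
    unfolding CC_f2 CC_f1 using L by (simp add: field_simps power2_eq_square complex_eq_iff)
  finally show ?thesis .
qed

lemma fc_CC: "fourier_coeff f L k = of_real (1 / sqrt L) * CC L f k"
proof -
  have "exp (- 2 * pi * \<i> * of_int k * of_real s / of_real L) = cnj (ee L k s)" for s
    unfolding ee_cnj unfolding ee_def by (rule arg_cong[where f=exp]) simp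
  then show ?thesis unfolding fourier_coeff_def CC_def by simp
qed

lemma norm_fc: "(norm (CC L f k))\<^sup>2 = L * (norm (fourier_coeff f L k))\<^sup>2"
  unfolding fc_CC using L by (simp add: norm_divide power_divide)

lemma sum2: "((\<lambda>k. 16 * pi ^ 4 / L ^ 3 * (of_int k ^ 2 * (of_int (k - n))\<^sup>2 * (norm (fourier_coeff f L k))\<^sup>2))
            has_sum I0 f L) (UNIV :: int set)"
proof -
  have "((\<lambda>k. L * ((norm (CC L hh k))\<^sup>2 / L)) has_sum I0 f L) UNIV"
    unfolding I0_hh by (rule has_sum_cmult_right, rule parseval[OF L cont_hh per_hh])
  moreover have "L * ((norm (CC L hh k))\<^sup>2 / L) = 16 * pi ^ 4 / L ^ 3 * (of_int k ^ 2 * (of_int (k - n))\<^sup>2 * (norm (fourier_coeff f L k))\<^sup>2)" for k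
  proof -
    have "L * ((norm (CC L hh k))\<^sup>2 / L) = ((2 * pi / L)\<^sup>2 * of_int k * of_int (k - n))\<^sup>2 * (norm (CC L f k))\<^sup>2"
      unfolding CC_hh norm_mult norm_of_real power_mult_distrib power2_abs using L by simp
    also have "\<dots> = 16 * pi ^ 4 / L ^ 3 * (of_int k ^ 2 * (of_int (k - n))\<^sup>2 * (norm (fourier_coeff f L k))\<^sup>2)"
      unfolding norm_fc by (rule alg1[OF L])
    finally show ?thesis .
  qed
  ultimately show ?thesis by simp
qed

definition "bb s = \<i> * f1 s"

lemma sum0: "((\<lambda>k. (2*pi/L)^3 * of_int k^2 * of_int (k - n) * (norm (fourier_coeff f L k))\<^sup>2) has_sum 0) (UNIV :: int set)"
proof -
  have cb: "continuous_on {0..L} bb" unfolding bb_def using cont_f1 by (intro continuous_intros)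
  have pb: "bb L = bb 0" unfolding bb_def using per1[of 0] by simp
  note P = polarization[OF L cont_hh[of "{0..L}"] per_hh cb pb]
  have CCb: "CC L bb k = of_real (- (2 * pi / L) * of_int k) * CC L f k" for k
  proof -
    have "CC L bb k = \<i> * CC L f1 k"
      unfolding bb_def[abs_def] by (rule CC_cmult[OF cont_f1])
    then show ?thesis unfolding CC_f1 using L by (simp add: field_simps complex_eq_iff)
  qed
  have t: "Re (CC L hh k * cnj (CC L bb k)) / L = (2*pi/L)^3 * of_int k^2 * of_int (k - n) * (norm (fourier_coeff f L k))\<^sup>2" for k
  proof -
    define C where "C = CC L f k"
    have "CC L hh k * cnj (CC L bb k) = of_real ((- (2 * pi / L)\<^sup>2 * of_int k * of_int (k - n)) * (- (2 * pi / L) * of_int k)) * (C * cnj C)"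
      unfolding CC_hh CCb C_def by (simp add: algebra_simps)
    also have "\<dots> = of_real ((- (2 * pi / L)\<^sup>2 * of_int k * of_int (k - n)) * (- (2 * pi / L) * of_int k) * (norm C)\<^sup>2)"
      unfolding complex_norm_square[symmetric] by simp
    finally have "Re (CC L hh k * cnj (CC L bb k)) / L = ((- (2 * pi / L)\<^sup>2 * of_int k * of_int (k - n)) * (- (2 * pi / L) * of_int k) * (L * (norm (fourier_coeff f L k))\<^sup>2)) / L"
      unfolding C_def norm_fc by simp
    also have "\<dots> = (2*pi/L)^3 * of_int k^2 * of_int (k - n) * (norm (fourier_coeff f L k))\<^sup>2"
      using L by (simp add: field_simps eval_nat_numeral)
    finally show ?thesis .
  qed
  have i: "integral {0..L} (\<lambda>s. Re (hh s * cnj (bb s))) = 0"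
  proof -
    have "Re (hh s * cnj (bb s)) = \<kappa> s - 2 * pi * n / L" for s
    proof -
      have "hh s * cnj (bb s) = of_real (osc_curvature f L s) * (f1 s * cnj (f1 s))"
        unfolding hh_eq bb_def by (simp add: algebra_simps)
      also have "\<dots> = of_real (osc_curvature f L s)"
        using complex_norm_square[of "f1 s"] norm1[of s] by simp
      finally show ?thesis unfolding osc_eq by simp
    qed
    then have "integral {0..L} (\<lambda>s. Re (hh s * cnj (bb s))) = integral {0..L} (\<lambda>s. \<kappa> s - 2 * pi * n / L)"
      by simp
    also have "\<dots> = integral {0..L} \<kappa> - integral {0..L} (\<lambda>s. 2 * pi * n / L)"
      by (rule integral_diff) (auto intro!: integrable_continuous_interval cont_kappa continuous_intros)
    also have "\<dots> = 0" unfolding intk using L by simp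
    finally show ?thesis .
  qed
  show ?thesis using P unfolding t i .
qed

lemma sum1: "((\<lambda>k. 16 * pi ^ 4 / L ^ 3 * (of_int k ^ 3 * of_int (k - n) * (norm (fourier_coeff f L k))\<^sup>2))
            has_sum I0 f L) (UNIV :: int set)"
proof -
  have "((\<lambda>k. 16 * pi ^ 4 / L ^ 3 * (of_int k ^ 2 * (of_int (k - n))\<^sup>2 * (norm (fourier_coeff f L k))\<^sup>2)
     + (2*pi/L)^3 * of_int k^2 * of_int (k - n) * (norm (fourier_coeff f L k))\<^sup>2 * (2 * pi * n)) has_sum (I0 f L + 0 * (2 * pi * n))) UNIV"
    by (intro has_sum_add sum2 has_sum_cmult_left sum0)
  moreover have "16 * pi ^ 4 / L ^ 3 * (of_int k ^ 2 * (of_int (k - n))\<^sup>2 * (norm (fourier_coeff f L k))\<^sup>2)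
     + (2*pi/L)^3 * of_int k^2 * of_int (k - n) * (norm (fourier_coeff f L k))\<^sup>2 * (2 * pi * n) =
     16 * pi ^ 4 / L ^ 3 * (of_int k ^ 3 * of_int (k - n) * (norm (fourier_coeff f L k))\<^sup>2)" for k
  proof -
    have "(2*pi/L)^3 * of_int k^2 * of_int (k - n) * (norm (fourier_coeff f L k))\<^sup>2 * (2 * pi * n) =
      16*pi^4/L^3 * (real_of_int n * (real_of_int k)^2 * real_of_int (k - n) * (norm (fourier_coeff f L k))\<^sup>2)" by (rule alg2[OF L])
    then show ?thesis by (simp add: algebra_simps power2_eq_square power3_eq_cube)
  qed
  ultimately show ?thesis by simp
qed

end



context curve begin

lemma cont_osc: "continuous_on S (osc_curvature f L)"
  unfolding osc_eq[abs_def] using cont_kappa by (intro continuous_intros)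

lemma I0_nonneg: "I0 f L \<ge> 0"
  unfolding I0_def using L
  by (intro mult_nonneg_nonneg integral_nonneg) (auto intro!: integrable_continuous_interval continuous_intros cont_osc)

lemma per_kappa: "\<kappa> (s + L) = \<kappa> s"
  unfolding kappa_def2 per1 per2 ..

lemma circle_imp_zero:
  assumes "is_n_fold_circle f L n" shows "I0 f L = 0"
proof -
  obtain c r \<sigma> where r: "r > 0" and fe: "\<And>s. f s = c + of_real r * exp (2 * pi * \<i> * of_int n * of_real (s + \<sigma>) / of_real L)"
    using assms unfolding is_n_fold_circle_def by blast
  define a where "a = 2 * pi * \<i> * of_int n / of_real L"
  define w where "w = of_real r * ee L n \<sigma>"
  have fw: "f s = c + w * ee L n s" for s
  proof -
    have "exp (2 * pi * \<i> * of_int n * of_real (s + \<sigma>) / of_real L) = ee L n s * ee L n \<sigma>"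
      unfolding ee_def exp_add[symmetric] by (rule arg_cong[where f=exp]) (simp add: algebra_simps add_divide_distrib)
    then show ?thesis unfolding fe w_def by (simp add: algebra_simps)
  qed
  have f1e: "f1 s = w * (a * ee L n s)" for s
  proof -
    have "(f has_vector_derivative w * (a * ee L n s)) (at s)"
      unfolding fw[abs_def] a_def using ee_deriv[of L n s UNIV]
      by (auto intro!: derivative_eq_intros)
    then show ?thesis unfolding vderiv_def by (rule vector_derivative_at)
  qed
  have f2e: "f2 s = a * f1 s" for s
  proof -
    have "(f1 has_vector_derivative w * (a * (a * ee L n s))) (at s)"
      unfolding f1e[abs_def] a_def using ee_deriv[of L n s UNIV]
      by (auto intro!: derivative_eq_intros)
    then have "f2 s = w * (a * (a * ee L n s))" unfolding vderiv_def by (rule vector_derivative_at)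
    then show ?thesis unfolding f1e by (simp add: algebra_simps)
  qed
  have ks: "\<kappa> s = 2 * pi * n / L" for s
  proof -
    have "(\<i> * of_real (\<kappa> s) - a) * f1 s = 0" using kappa_rel[of s] f2e[of s] by (auto simp: algebra_simps)
    moreover have "f1 s \<noteq> 0" using norm1[of s] by auto
    ultimately have "\<i> * of_real (\<kappa> s) = a" by simp
    then have "Im (\<i> * of_real (\<kappa> s)) = Im a" by simp
    then show ?thesis unfolding a_def by simp
  qed
  have "osc_curvature f L s = 0" for s unfolding osc_eq ks by simp
  then show ?thesis unfolding I0_def by simp
qed

end



context curve begin

lemma zero_imp_circle:
  assumes z: "I0 f L = 0" shows "is_n_fold_circle f L n"
proof -
  define osc where "osc = osc_curvature f L"
  have "integral {0..L} (\<lambda>s. (osc s)\<^sup>2) = 0" using z L unfolding I0_def osc_def by simp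
  moreover have "(\<lambda>s. (osc s)\<^sup>2) integrable_on {0..L}"
    unfolding osc_def by (intro integrable_continuous_interval continuous_intros cont_osc)
  ultimately have hi: "((\<lambda>s. (osc s)\<^sup>2) has_integral 0) (cbox 0 L)"
    by (metis cbox_interval integrable_integral)
  have o0: "osc s = 0" if "s \<in> {0..L}" for s
  proof -
    have "(osc s)\<^sup>2 = 0"
    proof (rule has_integral_0_cbox_imp_0[OF _ _ hi])
      show "continuous_on (cbox 0 L) (\<lambda>s. (osc s)\<^sup>2)" unfolding osc_def by (intro continuous_intros cont_osc)
      show "box 0 L \<noteq> {}" using L by simp
      show "s \<in> cbox 0 L" using that by simp
    qed auto
    then show ?thesis by simp
  qed
  define a where "a = 2 * pi * \<i> * of_int n / of_real L"
  have a0: "a \<noteq> 0" unfolding a_def using L n1 by simp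
  have ks: "\<kappa> s = 2 * pi * n / L" for s
    by (rule per_ext[of L \<kappa>, OF L per_kappa]) (use o0 in \<open>simp add: osc_def osc_eq\<close>)
  have f2a: "f2 s = a * f1 s" for s unfolding kappa_rel ks a_def by simp
  obtain c1 where c1: "\<And>s. s \<in> UNIV \<Longrightarrow> f1 s * ee L (-n) s = c1"
  proof (rule has_vector_derivative_zero_constant[of UNIV "\<lambda>s. f1 s * ee L (-n) s"])
    fix x
    have "((\<lambda>s. f1 s * ee L (-n) s) has_vector_derivative f1 x * ((2 * pi * \<i> * of_int (-n) / of_real L) * ee L (-n) x) + f2 x * ee L (-n) x) (at x)"
      by (rule has_vector_derivative_mult[OF d1 ee_deriv])
    moreover have "f1 x * ((2 * pi * \<i> * of_int (-n) / of_real L) * ee L (-n) x) + f2 x * ee L (-n) x = 0"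
      unfolding f2a a_def by (simp add: algebra_simps)
    ultimately show "((\<lambda>s. f1 s * ee L (-n) s) has_vector_derivative 0) (at x within UNIV)" by simp
  qed auto
  have f1e: "f1 s = f1 0 * ee L n s" for s
  proof -
    have "f1 s * ee L (-n) s = f1 0" using c1[of s] c1[of 0] by simp
    then have "f1 s * ee L (-n) s * ee L n s = f1 0 * ee L n s" by simp
    moreover have "ee L (-n) s * ee L n s = 1" unfolding ee_add by (simp add: ee_def)
    ultimately show ?thesis by (simp add: mult.assoc)
  qed
  define w where "w = f1 0 / a"
  obtain c2 where c2: "\<And>s. s \<in> UNIV \<Longrightarrow> f s - w * ee L n s = c2"
  proof (rule has_vector_derivative_zero_constant[of UNIV "\<lambda>s. f s - w * ee L n s"])
    fix x
    have "((\<lambda>s. f s - w * ee L n s) has_vector_derivative f1 x - w * (a * ee L n x)) (at x)"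
      unfolding a_def by (intro derivative_intros d0 ee_deriv)
    moreover have "f1 x - w * (a * ee L n x) = 0" unfolding f1e[of x] w_def using a0 by simp
    ultimately show "((\<lambda>s. f s - w * ee L n s) has_vector_derivative 0) (at x within UNIV)" by simp
  qed auto
  have fe: "f s = (f 0 - w) + w * ee L n s" for s using c2[of s] c2[of 0] by (simp add: algebra_simps)
  have w0: "w \<noteq> 0" unfolding w_def using a0 norm1[of 0] by auto
  define \<theta> where "\<theta> = Arg w"
  define \<sigma> where "\<sigma> = \<theta> * L / (2 * pi * n)"
  have wp: "w = of_real (norm w) * exp (\<i> * of_real \<theta>)" unfolding \<theta>_def using Arg_eq[OF w0] .
  show ?thesis unfolding is_n_fold_circle_def
  proof (intro exI conjI allI)
    show "norm w > 0" using w0 by simp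
    fix s
    have "exp (2 * pi * \<i> * of_int n * of_real (s + \<sigma>) / of_real L) = exp (\<i> * of_real \<theta>) * ee L n s"
    proof -
      have "2 * pi * \<i> * of_int n * of_real (s + \<sigma>) / of_real L = \<i> * of_real \<theta> + 2 * pi * \<i> * of_int n * of_real s / of_real L"
        unfolding \<sigma>_def using L n1 by (simp add: field_simps)
      then show ?thesis unfolding ee_def by (simp add: exp_add)
    qed
    then show "f s = (f 0 - w) + of_real (norm w) * exp (2 * pi * \<i> * of_int n * of_real (s + \<sigma>) / of_real L)"
      using fe[of s] wp by (metis mult.assoc)
  qed
qed

end

theorem mainTheorem2:
  fixes f :: "real \<Rightarrow> complex" and L :: real and n :: int
  assumes "closed_arclength_curve f L"
    and "rotation_number f L = of_int n"
    and "n \<ge> 1"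
  shows "((\<lambda>k. 16 * pi ^ 4 / L ^ 3 * (of_int k ^ 3 * of_int (k - n) * (norm (fourier_coeff f L k))\<^sup>2))
            has_sum I0 f L) (UNIV :: int set) \<and>
    ((\<lambda>k. 16 * pi ^ 4 / L ^ 3 * (of_int k ^ 2 * (of_int (k - n))\<^sup>2 * (norm (fourier_coeff f L k))\<^sup>2))
            has_sum I0 f L) (UNIV :: int set) \<and>
    I0 f L \<ge> 0 \<and>
    (I0 f L = 0 \<longleftrightarrow> is_n_fold_circle f L n)"
proof -
  interpret curve f L n using assms by unfold_locales
  show ?thesis using sum1 sum2 I0_nonneg circle_imp_zero zero_imp_circle by blast
qed

end
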